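(* Let $\mathcal A'$ be a tree weakening of a finite tree multi-algebra $\mathcal A$. Then (1) every basic relation closed under projection for $\mathcal A'$ is closed under projection for $\mathcal A$; and (2) every scenario that is algebraically closed for $\mathcal A'$ is algebraically closed for $\mathcal A$.
   Context: A finite non-associative algebra is a tuple $(\mathcal A,\cup,\neg,\emptyset,\mathcal B,\diamond,\overline{\cdot},e)$ where $(\mathcal A,\cup,\neg,\emptyset,\mathcal B)$ is a finite Boolean algebra and for all $x,y,z$: $\overline{\overline x}=x$, $\overline{x\cup y}=\overline x\cup\overline y$, $\overline{x\diamond y}=\overline y\diamond\overline x$, $e\diamond x=x\diamond e=x$, $x\diamond(y\cup z)=(x\diamond y)\cup(x\diamond z)$, $(x\diamond y)\cap\overline z=\emptyset\iff(y\diamond z)\cap\overline x=\emptyset$. $r\subseteq r'$ means $r\cup r'=r'$; atoms are basic relations; $\mathsf B_i$ denotes the atoms of $\mathcal A_i$. A projection operator from $\mathcal A$ to $\mathcal A'$ is a map $\Rsh$ with $\Rsh(r\cup r')=\Rsh r\cup\Rsh r'$ and $\Rsh\overline r=\overline{\Rsh r}$. A finite multi-algebra is a product $\mathcal A_1\times\cdots\times\mathcal A_m$ of finite non-associative algebras with projection operators $\Rsh_i^j:\mathcal A_i\to\mathcal A_j$ for distinct $i,j$; operations componentwise on $R=(R_1,\dots,R_m)$; $R$ basic if all $R_i$ are atoms; $R$ closed under projection if $R_j\subseteq\Rsh_i^jR_i$ for all distinct $i,j$. A network is a finite set $E$ of variables with a relation $N^{xy}$ for distinct $x,y$, $N^{yx}=\overline{N^{xy}}$;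 a scenario if all $N^{xy}$ basic; closed under composition if $N^{xz}\subseteq N^{xy}\diamond N^{yz}$ for all distinct $x,y,z$; algebraically closed if closed under composition and every $N^{xy}$ is closed under projection. The inverse projection $\check\Rsh_i^j:\mathcal A_j\to\mathcal A_i$ of $\Rsh_i^j$ is defined by: for $b\in\mathsf B_i$, $b'\in\mathsf B_j$, $b\subseteq\check\Rsh_i^jb'\iff b'\subseteq\Rsh_i^jb$. An anti-tree structure on $V$ is a directed graph $(V,E)$ with a root $r$ such that every $v\ne r$ has exactly one directed path to $r$; write $v\to v'$ for an edge. A plenary anti-tree structure of $\mathcal A$ is an anti-tree structure $\mathtt A$ on $\{1,\dots,m\}$ such that for all distinct $i,j$, with $i=k_0\to\cdots\to k_s\leftarrow\cdots\leftarrow k_{s+t+1}=j$ the shortest oriented chain between $i$ and $j$ in $\mathtt A$, every $b\in\mathsf B_i$ satisfies $\Rsh_i^jb\supseteq\check\Rsh_j^{k_{s+t}}\cdots\check\Rsh_{k_{s+1}}^{k_s}\Rsh_{k_{s-1}}^{k_s}\cdots\Rsh_i^{k_1}b$. $\mathcal A$ is a tree multi-algebra if it has one. $\mathcal A'$ is a weakening of $\mathcal A$ if it has the same algebras and operations and $\Rsh_i^jb\subseteq\Rsh_i'^jb$ for all distinct $i,j$ and atoms $b$ of $\mathcal A_i$ ($\Rsh'$ the projections of $\mathcal A'$). It is a tree weakening if moreover there is a plenary anti-tree structure $\mathtt A$ of $\mathcal A$ such that $\Rsh_i^jb=\Rsh_i'^jb$ for all atoms $b$ of $\mathcal A_i$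 whenever $i\to j$ is an edge of $\mathtt A$. *)

theory Defs
  imports Main
begin

text \<open>A finite Boolean algebra is represented as the powerset of its (finite) set of atoms B;
  relations are subsets of B, union is set union, complement is B - r, the empty relation
  is {} and the universal relation is B.  Atoms (basic relations) are the singletons {b}, b in B.\<close>

definition na_algebra ::
  "'a set \<Rightarrow> ('a set \<Rightarrow> 'a set \<Rightarrow> 'a set) \<Rightarrow> ('a set \<Rightarrow> 'a set) \<Rightarrow> 'a set \<Rightarrow> bool" where
  "na_algebra B cmp conv e \<longleftrightarrow>
     finite B \<and> e \<subseteq> B \<and>
     (\<forall>x y. x \<subseteq> B \<longrightarrow> y \<subseteq> B \<longrightarrow> cmp x y \<subseteq> B) \<and>
     (\<forall>x. x \<subseteq> B \<longrightarrow> conv x \<subseteq> B) \<and>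
     (\<forall>x. x \<subseteq> B \<longrightarrow> conv (conv x) = x) \<and>
     (\<forall>x y. x \<subseteq> B \<longrightarrow> y \<subseteq> B \<longrightarrow> conv (x \<union> y) = conv x \<union> conv y) \<and>
     (\<forall>x y. x \<subseteq> B \<longrightarrow> y \<subseteq> B \<longrightarrow> conv (cmp x y) = cmp (conv y) (conv x)) \<and>
     (\<forall>x. x \<subseteq> B \<longrightarrow> cmp e x = x \<and> cmp x e = x) \<and>
     (\<forall>x y z. x \<subseteq> B \<longrightarrow> y \<subseteq> B \<longrightarrow> z \<subseteq> B \<longrightarrow> cmp x (y \<union> z) = cmp x y \<union> cmp x z) \<and>
     (\<forall>x y z. x \<subseteq> B \<longrightarrow> y \<subseteq> B \<longrightarrow> z \<subseteq> B \<longrightarrow>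
        (cmp x y \<inter> conv z = {} \<longleftrightarrow> cmp y z \<inter> conv x = {}))"

definition projection_op ::
  "'a set \<Rightarrow> ('a set \<Rightarrow> 'a set) \<Rightarrow> 'a set \<Rightarrow> ('a set \<Rightarrow> 'a set) \<Rightarrow> ('a set \<Rightarrow> 'a set) \<Rightarrow> bool" where
  "projection_op B conv B' conv' P \<longleftrightarrow>
     (\<forall>r. r \<subseteq> B \<longrightarrow> P r \<subseteq> B') \<and>
     (\<forall>r r'. r \<subseteq> B \<longrightarrow> r' \<subseteq> B \<longrightarrow> P (r \<union> r') = P r \<union> P r') \<and>
     (\<forall>r. r \<subseteq> B \<longrightarrow> P (conv r) = conv' (P r))"

definition multi_algebra ::
  "nat \<Rightarrow> (nat \<Rightarrow> 'a set) \<Rightarrow> (nat \<Rightarrow> 'a set \<Rightarrow> 'a set \<Rightarrow> 'a set) \<Rightarrow> (nat \<Rightarrow> 'a set \<Rightarrow> 'a set)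
     \<Rightarrow> (nat \<Rightarrow> 'a set) \<Rightarrow> (nat \<Rightarrow> nat \<Rightarrow> 'a set \<Rightarrow> 'a set) \<Rightarrow> bool" where
  "multi_algebra m B cmp conv e Pr \<longleftrightarrow>
     (\<forall>i\<in>{1..m}. na_algebra (B i) (cmp i) (conv i) (e i)) \<and>
     (\<forall>i\<in>{1..m}. \<forall>j\<in>{1..m}. i \<noteq> j \<longrightarrow> projection_op (B i) (conv i) (B j) (conv j) (Pr i j))"

text \<open>Relations of the multi-algebra are tuples R :: nat => 'a set (components 1..m).\<close>
definition basic_rel :: "nat \<Rightarrow> (nat \<Rightarrow> 'a set) \<Rightarrow> (nat \<Rightarrow> 'a set) \<Rightarrow> bool" where
  "basic_rel m B R \<longleftrightarrow> (\<forall>i\<in>{1..m}. \<exists>b\<in>B i. R i = {b})"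

definition closed_proj :: "nat \<Rightarrow> (nat \<Rightarrow> nat \<Rightarrow> 'a set \<Rightarrow> 'a set) \<Rightarrow> (nat \<Rightarrow> 'a set) \<Rightarrow> bool" where
  "closed_proj m Pr R \<longleftrightarrow> (\<forall>i\<in>{1..m}. \<forall>j\<in>{1..m}. i \<noteq> j \<longrightarrow> R j \<subseteq> Pr i j (R i))"

definition network ::
  "nat \<Rightarrow> (nat \<Rightarrow> 'a set) \<Rightarrow> (nat \<Rightarrow> 'a set \<Rightarrow> 'a set) \<Rightarrow> 'v set \<Rightarrow> ('v \<Rightarrow> 'v \<Rightarrow> nat \<Rightarrow> 'a set) \<Rightarrow> bool" where
  "network m B conv V N \<longleftrightarrow> finite V \<and>
     (\<forall>x\<in>V. \<forall>y\<in>V. x \<noteq> y \<longrightarrow> (\<forall>i\<in>{1..m}. N x y i \<subseteq> B i \<and> N y x i = conv i (N x y i)))"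

definition scenario ::
  "nat \<Rightarrow> (nat \<Rightarrow> 'a set) \<Rightarrow> (nat \<Rightarrow> 'a set \<Rightarrow> 'a set) \<Rightarrow> 'v set \<Rightarrow> ('v \<Rightarrow> 'v \<Rightarrow> nat \<Rightarrow> 'a set) \<Rightarrow> bool" where
  "scenario m B conv V N \<longleftrightarrow> network m B conv V N \<and>
     (\<forall>x\<in>V. \<forall>y\<in>V. x \<noteq> y \<longrightarrow> basic_rel m B (N x y))"

definition comp_closed ::
  "nat \<Rightarrow> (nat \<Rightarrow> 'a set \<Rightarrow> 'a set \<Rightarrow> 'a set) \<Rightarrow> 'v set \<Rightarrow> ('v \<Rightarrow> 'v \<Rightarrow> nat \<Rightarrow> 'a set) \<Rightarrow> bool" where
  "comp_closed m cmp V N \<longleftrightarrow>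
     (\<forall>x\<in>V. \<forall>y\<in>V. \<forall>z\<in>V. x \<noteq> y \<and> y \<noteq> z \<and> x \<noteq> z \<longrightarrow>
        (\<forall>i\<in>{1..m}. N x z i \<subseteq> cmp i (N x y i) (N y z i)))"

definition alg_closed ::
  "nat \<Rightarrow> (nat \<Rightarrow> 'a set \<Rightarrow> 'a set \<Rightarrow> 'a set) \<Rightarrow> (nat \<Rightarrow> nat \<Rightarrow> 'a set \<Rightarrow> 'a set)
     \<Rightarrow> 'v set \<Rightarrow> ('v \<Rightarrow> 'v \<Rightarrow> nat \<Rightarrow> 'a set) \<Rightarrow> bool" where
  "alg_closed m cmp Pr V N \<longleftrightarrow> comp_closed m cmp V N \<and>
     (\<forall>x\<in>V. \<forall>y\<in>V. x \<noteq> y \<longrightarrow> closed_proj m Pr (N x y))"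

text \<open>Inverse projection of Pr i j (a map from A_j to A_i): on atoms,
  b \<subseteq> inv b' iff b' \<subseteq> Pr i j b; extended to all relations by union.\<close>
definition inv_proj ::
  "(nat \<Rightarrow> 'a set) \<Rightarrow> (nat \<Rightarrow> nat \<Rightarrow> 'a set \<Rightarrow> 'a set) \<Rightarrow> nat \<Rightarrow> nat \<Rightarrow> 'a set \<Rightarrow> 'a set" where
  "inv_proj B Pr i j r = {b \<in> B i. \<exists>b'\<in>r. b' \<in> Pr i j {b}}"

definition walk :: "('n \<times> 'n) set \<Rightarrow> 'n list \<Rightarrow> bool" where
  "walk E ps \<longleftrightarrow> ps \<noteq> [] \<and> (\<forall>k. Suc k < length ps \<longrightarrow> (ps ! k, ps ! Suc k) \<in> E)"

definition anti_tree :: "'n set \<Rightarrow> ('n \<times> 'n) set \<Rightarrow> 'n \<Rightarrow> bool" where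
  "anti_tree V E r \<longleftrightarrow> E \<subseteq> V \<times> V \<and> r \<in> V \<and>
     (\<forall>v\<in>V. v \<noteq> r \<longrightarrow> (\<exists>!ps. walk E ps \<and> hd ps = v \<and> last ps = r))"

text \<open>An oriented chain i = k_0 -> ... -> k_s <- ... <- j, given as the upward walk ps
  from i to k_s and the upward walk qs from j to k_s.\<close>
definition oriented_chain :: "('n \<times> 'n) set \<Rightarrow> 'n \<Rightarrow> 'n \<Rightarrow> 'n list \<Rightarrow> 'n list \<Rightarrow> bool" where
  "oriented_chain E i j ps qs \<longleftrightarrow> walk E ps \<and> walk E qs \<and> hd ps = i \<and> hd qs = j \<and> last ps = last qs"

definition shortest_chain :: "('n \<times> 'n) set \<Rightarrow> 'n \<Rightarrow> 'n \<Rightarrow> 'n list \<Rightarrow> 'n list \<Rightarrow> bool" where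
  "shortest_chain E i j ps qs \<longleftrightarrow> oriented_chain E i j ps qs \<and>
     (\<forall>ps' qs'. oriented_chain E i j ps' qs' \<longrightarrow> length ps + length qs \<le> length ps' + length qs')"

fun up_map :: "(nat \<Rightarrow> nat \<Rightarrow> 'a set \<Rightarrow> 'a set) \<Rightarrow> nat list \<Rightarrow> 'a set \<Rightarrow> 'a set" where
  "up_map Pr (x # y # xs) r = up_map Pr (y # xs) (Pr x y r)"
| "up_map Pr _ r = r"

fun down_map :: "(nat \<Rightarrow> 'a set) \<Rightarrow> (nat \<Rightarrow> nat \<Rightarrow> 'a set \<Rightarrow> 'a set) \<Rightarrow> nat list \<Rightarrow> 'a set \<Rightarrow> 'a set" where
  "down_map B Pr (x # y # xs) r = inv_proj B Pr x y (down_map B Pr (y # xs) r)"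
| "down_map B Pr _ r = r"

definition plenary_anti_tree ::
  "nat \<Rightarrow> (nat \<Rightarrow> 'a set) \<Rightarrow> (nat \<Rightarrow> nat \<Rightarrow> 'a set \<Rightarrow> 'a set) \<Rightarrow> (nat \<times> nat) set \<Rightarrow> nat \<Rightarrow> bool" where
  "plenary_anti_tree m B Pr E r \<longleftrightarrow> anti_tree {1..m} E r \<and>
     (\<forall>i\<in>{1..m}. \<forall>j\<in>{1..m}. i \<noteq> j \<longrightarrow>
        (\<forall>ps qs. shortest_chain E i j ps qs \<longrightarrow>
           (\<forall>b\<in>B i. down_map B Pr qs (up_map Pr ps {b}) \<subseteq> Pr i j {b})))"

definition tree_multi_algebra ::
  "nat \<Rightarrow> (nat \<Rightarrow> 'a set) \<Rightarrow> (nat \<Rightarrow> 'a set \<Rightarrow> 'a set \<Rightarrow> 'a set) \<Rightarrow> (nat \<Rightarrow> 'a set \<Rightarrow> 'a set)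
     \<Rightarrow> (nat \<Rightarrow> 'a set) \<Rightarrow> (nat \<Rightarrow> nat \<Rightarrow> 'a set \<Rightarrow> 'a set) \<Rightarrow> bool" where
  "tree_multi_algebra m B cmp conv e Pr \<longleftrightarrow> multi_algebra m B cmp conv e Pr \<and>
     (\<exists>E r. plenary_anti_tree m B Pr E r)"

definition weakening ::
  "nat \<Rightarrow> (nat \<Rightarrow> 'a set) \<Rightarrow> (nat \<Rightarrow> 'a set \<Rightarrow> 'a set \<Rightarrow> 'a set) \<Rightarrow> (nat \<Rightarrow> 'a set \<Rightarrow> 'a set)
     \<Rightarrow> (nat \<Rightarrow> 'a set) \<Rightarrow> (nat \<Rightarrow> nat \<Rightarrow> 'a set \<Rightarrow> 'a set) \<Rightarrow> (nat \<Rightarrow> nat \<Rightarrow> 'a set \<Rightarrow> 'a set) \<Rightarrow> bool" where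
  "weakening m B cmp conv e Pr Pr' \<longleftrightarrow>
     multi_algebra m B cmp conv e Pr \<and> multi_algebra m B cmp conv e Pr' \<and>
     (\<forall>i\<in>{1..m}. \<forall>j\<in>{1..m}. i \<noteq> j \<longrightarrow> (\<forall>b\<in>B i. Pr i j {b} \<subseteq> Pr' i j {b}))"

definition tree_weakening ::
  "nat \<Rightarrow> (nat \<Rightarrow> 'a set) \<Rightarrow> (nat \<Rightarrow> 'a set \<Rightarrow> 'a set \<Rightarrow> 'a set) \<Rightarrow> (nat \<Rightarrow> 'a set \<Rightarrow> 'a set)
     \<Rightarrow> (nat \<Rightarrow> 'a set) \<Rightarrow> (nat \<Rightarrow> nat \<Rightarrow> 'a set \<Rightarrow> 'a set) \<Rightarrow> (nat \<Rightarrow> nat \<Rightarrow> 'a set \<Rightarrow> 'a set) \<Rightarrow> bool" where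
  "tree_weakening m B cmp conv e Pr Pr' \<longleftrightarrow> weakening m B cmp conv e Pr Pr' \<and>
     (\<exists>E r. plenary_anti_tree m B Pr E r \<and>
        (\<forall>(i, j)\<in>E. i \<noteq> j \<longrightarrow> (\<forall>b\<in>B i. Pr i j {b} = Pr' i j {b})))"

end

theory Submission
  imports Defs
begin

lemma walk_Cons2: "walk E (x # y # xs) \<longleftrightarrow> (x, y) \<in> E \<and> walk E (y # xs)"
proof
  assume w: "walk E (x # y # xs)"
  have "Suc 0 < length (x # y # xs)" by simp
  then have "((x # y # xs) ! 0, (x # y # xs) ! Suc 0) \<in> E" using w unfolding walk_def by blast
  then have "(x, y) \<in> E" by simp
  moreover have "walk E (y # xs)" unfolding walk_def
  proof (intro conjI allI impI)
    fix k assume "Suc k < length (y # xs)"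
    then have "Suc (Suc k) < length (x # y # xs)" by simp
    then have "((x # y # xs) ! Suc k, (x # y # xs) ! Suc (Suc k)) \<in> E" using w unfolding walk_def by blast
    then show "((y # xs) ! k, (y # xs) ! Suc k) \<in> E" by simp
  qed simp
  ultimately show "(x, y) \<in> E \<and> walk E (y # xs)" by blast
next
  assume a: "(x, y) \<in> E \<and> walk E (y # xs)"
  show "walk E (x # y # xs)" unfolding walk_def
  proof (intro conjI allI impI)
    fix k assume k: "Suc k < length (x # y # xs)"
    show "((x # y # xs) ! k, (x # y # xs) ! Suc k) \<in> E"
    proof (cases k)
      case 0 then show ?thesis using a by simp
    next
      case (Suc k')
      then have "Suc k' < length (y # xs)" using k by simp
      then have "((y # xs) ! k', (y # xs) ! Suc k') \<in> E" using a unfolding walk_def by blast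
      then show ?thesis using Suc by simp
    qed
  qed simp
qed

lemma walk_single: "walk E [x]"
  unfolding walk_def by simp

lemma walk_snoc: "walk E ps \<Longrightarrow> (last ps, v) \<in> E \<Longrightarrow> walk E (ps @ [v])"
proof (induction ps rule: induct_list012)
  case 1 then show ?case by (simp add: walk_def)
next
  case (2 x) then show ?case by (simp add: walk_Cons2 walk_single)
next
  case (3 x y zs)
  then show ?case by (simp add: walk_Cons2)
qed

lemma up_lemma:
  assumes E: "E \<subseteq> {1..m} \<times> {1..m}"
    and nl: "\<forall>(x, y)\<in>E. x \<noteq> y"
    and ed: "\<forall>(x, y)\<in>E. b y \<in> Pr x y {b x}"
    and pr: "\<forall>x\<in>{1..m}. \<forall>y\<in>{1..m}. x \<noteq> y \<longrightarrow> projection_op (B x) (conv x) (B y) (conv y) (Pr x y)"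
  shows "walk E ps \<Longrightarrow> hd ps \<in> {1..m} \<Longrightarrow> r \<subseteq> B (hd ps) \<Longrightarrow> b (hd ps) \<in> r \<Longrightarrow>
     b (last ps) \<in> up_map Pr ps r \<and> up_map Pr ps r \<subseteq> B (last ps)"
proof (induction ps arbitrary: r rule: induct_list012)
  case (3 x y xs r)
  have xy: "(x, y) \<in> E" and w: "walk E (y # xs)" using 3(3) by (auto simp: walk_Cons2)
  have xm: "x \<in> {1..m}" and ym: "y \<in> {1..m}" using xy E by auto
  have ne: "x \<noteq> y" using xy nl by auto
  have po: "projection_op (B x) (conv x) (B y) (conv y) (Pr x y)" using pr xm ym ne by blast
  have rB: "r \<subseteq> B x" and bx: "b x \<in> r" using 3 by auto
  have bxB: "{b x} \<subseteq> B x" using rB bx by auto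
  have po1: "\<forall>r. r \<subseteq> B x \<longrightarrow> Pr x y r \<subseteq> B y"
    using po unfolding projection_op_def by (rule conjunct1)
  have po2: "\<forall>r r'. r \<subseteq> B x \<longrightarrow> r' \<subseteq> B x \<longrightarrow> Pr x y (r \<union> r') = Pr x y r \<union> Pr x y r'"
    using po unfolding projection_op_def by (rule conjunct1[OF conjunct2])
  have "Pr x y r = Pr x y ({b x} \<union> r)" using bx by (simp add: insert_absorb)
  also have "\<dots> = Pr x y {b x} \<union> Pr x y r" using po2 bxB rB by (metis insert_is_Un)
  finally have "b y \<in> Pr x y r" using ed xy by auto
  moreover have "Pr x y r \<subseteq> B y" using po1 rB by simp
  ultimately have "b (last (y # xs)) \<in> up_map Pr (y # xs) (Pr x y r) \<and> up_map Pr (y # xs) (Pr x y r) \<subseteq> B (last (y # xs))"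
    using 3(2)[of "Pr x y r"] w ym by simp
  then show ?case by simp
qed (auto simp: walk_def)

lemma down_lemma:
  assumes E: "E \<subseteq> {1..m} \<times> {1..m}"
    and ed: "\<forall>(x, y)\<in>E. b y \<in> Pr x y {b x}"
    and bB: "\<forall>k\<in>{1..m}. b k \<in> B k"
  shows "walk E qs \<Longrightarrow> b (last qs) \<in> r \<Longrightarrow> b (hd qs) \<in> down_map B Pr qs r"
proof (induction qs rule: induct_list012)
  case (3 x y xs)
  have xy: "(x, y) \<in> E" and w: "walk E (y # xs)" using 3(3) by (auto simp: walk_Cons2)
  have xm: "x \<in> {1..m}" using xy E by auto
  have "b y \<in> down_map B Pr (y # xs) r" using 3 w by simp
  moreover have "b y \<in> Pr x y {b x}" using ed xy by auto
  moreover have "b x \<in> B x" using bB xm by blast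
  ultimately show ?case by (auto simp: inv_proj_def)
qed (auto simp: walk_def)

lemma part1:
  assumes ma: "multi_algebra m B cmp conv e Pr"
    and pl: "plenary_anti_tree m B Pr E r"
    and eq: "\<forall>(i, j)\<in>E. i \<noteq> j \<longrightarrow> (\<forall>b\<in>B i. Pr i j {b} = Pr' i j {b})"
    and br: "basic_rel m B R"
    and cp: "closed_proj m Pr' R"
  shows "closed_proj m Pr R"
  unfolding closed_proj_def
proof (intro ballI impI)
  fix i j assume im: "i \<in> {1..m}" and jm: "j \<in> {1..m}" and ij: "i \<noteq> j"
  obtain b where b: "\<forall>k\<in>{1..m}. b k \<in> B k \<and> R k = {b k}"
    using br unfolding basic_rel_def by metis
  have at: "anti_tree {1..m} E r" using pl unfolding plenary_anti_tree_def by blast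
  have E: "E \<subseteq> {1..m} \<times> {1..m}" and rm: "r \<in> {1..m}"
    and un: "\<forall>v\<in>{1..m}. v \<noteq> r \<longrightarrow> (\<exists>!ps. walk E ps \<and> hd ps = v \<and> last ps = r)"
    using at unfolding anti_tree_def by auto
  have wr: "\<exists>ps. walk E ps \<and> hd ps = v \<and> last ps = r" if "v \<in> {1..m}" for v
  proof (cases "v = r")
    case True then show ?thesis using walk_single[of E r] by (intro exI[of _ "[r]"]) simp
  next
    case False then show ?thesis using un that by blast
  qed
  have nl: "\<forall>(x, y)\<in>E. x \<noteq> y"
  proof (clarify)
    fix v assume vv: "(v, v) \<in> E"
    have vm: "v \<in> {1..m}" using vv E by auto
    show False
    proof (cases "v = r")
      case False
      obtain ps where ps: "walk E ps" "hd ps = v" "last ps = r" using wr vm by blast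
      have ne: "ps \<noteq> []" using ps(1) unfolding walk_def by simp
      then have pseq: "ps = hd ps # tl ps" by simp
      have "walk E (v # ps)" using ps vv pseq walk_Cons2[of E v "hd ps" "tl ps"] by simp
      moreover have "hd (v # ps) = v" "last (v # ps) = r" using ps ne by auto
      ultimately have "v # ps = ps" using un vm False ps by blast
      then show False by (metis list.inject not_Cons_self)
    next
      case True
      define w where "w = (if i \<noteq> r then i else j)"
      have wm: "w \<in> {1..m}" and wne: "w \<noteq> r" using im jm ij unfolding w_def by auto
      obtain ps where ps: "walk E ps" "hd ps = w" "last ps = r" using wr wm by blast
      have ne: "ps \<noteq> []" using ps(1) unfolding walk_def by simp
      have "walk E (ps @ [r])" using walk_snoc[OF ps(1)] ps(3) vv True by simp
      moreover have "hd (ps @ [r]) = w" "last (ps @ [r]) = r" using ps ne by auto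
      ultimately have "ps @ [r] = ps" using un wm wne ps by blast
      then show False by simp
    qed
  qed
  have ed: "\<forall>(x, y)\<in>E. b y \<in> Pr x y {b x}"
  proof (clarify)
    fix x y assume xy: "(x, y) \<in> E"
    have xm: "x \<in> {1..m}" and ym: "y \<in> {1..m}" using xy E by auto
    have ne: "x \<noteq> y" using xy nl by auto
    have "R y \<subseteq> Pr' x y (R x)" using cp xm ym ne unfolding closed_proj_def by blast
    then have "b y \<in> Pr' x y {b x}" using b xm ym by auto
    moreover have "Pr x y {b x} = Pr' x y {b x}" using eq xy ne b xm by auto
    ultimately show "b y \<in> Pr x y {b x}" by simp
  qed
  have bB: "\<forall>k\<in>{1..m}. b k \<in> B k" using b by blast
  have pr: "\<forall>x\<in>{1..m}. \<forall>y\<in>{1..m}. x \<noteq> y \<longrightarrow> projection_op (B x) (conv x) (B y) (conv y) (Pr x y)"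
    using ma unfolding multi_algebra_def by blast
  obtain ps0 qs0 where pq0: "walk E ps0" "hd ps0 = i" "last ps0 = r" "walk E qs0" "hd qs0 = j" "last qs0 = r"
    using wr im jm by metis
  define P where "P n = (\<exists>ps qs. oriented_chain E i j ps qs \<and> length ps + length qs = n)" for n
  have "P (length ps0 + length qs0)" unfolding P_def oriented_chain_def using pq0 by metis
  then have "P (LEAST n. P n)" by (rule LeastI)
  then obtain ps qs where oc: "oriented_chain E i j ps qs" and len: "length ps + length qs = (LEAST n. P n)"
    unfolding P_def by blast
  have sc: "shortest_chain E i j ps qs"
    unfolding shortest_chain_def
  proof (intro conjI oc allI impI)
    fix ps' qs' assume "oriented_chain E i j ps' qs'"
    then have "P (length ps' + length qs')" unfolding P_def by blast
    then show "length ps + length qs \<le> length ps' + length qs'" unfolding len by (rule Least_le)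
  qed
  have incl: "down_map B Pr qs (up_map Pr ps {b i}) \<subseteq> Pr i j {b i}"
    using pl sc im jm ij bB unfolding plenary_anti_tree_def by blast
  have ow: "walk E ps" "hd ps = i" "walk E qs" "hd qs = j" "last ps = last qs"
    using oc unfolding oriented_chain_def by auto
  have "b (last ps) \<in> up_map Pr ps {b i}"
    using up_lemma[of E m b Pr B conv ps "{b i}", OF E nl ed pr] ow im bB by auto
  then have "b j \<in> down_map B Pr qs (up_map Pr ps {b i})"
    using down_lemma[of E m b Pr B qs, OF E ed bB] ow by auto
  then show "R j \<subseteq> Pr i j (R i)" using incl b im jm by auto
qed

theorem lemma6p29:
  fixes m :: nat
    and B :: "nat \<Rightarrow> 'a set"
    and cmp :: "nat \<Rightarrow> 'a set \<Rightarrow> 'a set \<Rightarrow> 'a set"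
    and conv :: "nat \<Rightarrow> 'a set \<Rightarrow> 'a set"
    and e :: "nat \<Rightarrow> 'a set"
    and Pr Pr' :: "nat \<Rightarrow> nat \<Rightarrow> 'a set \<Rightarrow> 'a set"
  assumes "tree_multi_algebra m B cmp conv e Pr"
    and "tree_weakening m B cmp conv e Pr Pr'"
  shows "(\<forall>R. basic_rel m B R \<longrightarrow> closed_proj m Pr' R \<longrightarrow> closed_proj m Pr R)
       \<and> (\<forall>(V :: 'v set) N. scenario m B conv V N \<longrightarrow> alg_closed m cmp Pr' V N
              \<longrightarrow> alg_closed m cmp Pr V N)"
proof -
  have ma: "multi_algebra m B cmp conv e Pr" using assms(1) unfolding tree_multi_algebra_def by blast
  obtain E r where pl: "plenary_anti_tree m B Pr E r"
    and eq: "\<forall>(i, j)\<in>E. i \<noteq> j \<longrightarrow> (\<forall>b\<in>B i. Pr i j {b} = Pr' i j {b})"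
    using assms(2) unfolding tree_weakening_def by blast
  have p1: "\<forall>R. basic_rel m B R \<longrightarrow> closed_proj m Pr' R \<longrightarrow> closed_proj m Pr R"
    using part1[OF ma pl eq] by blast
  moreover have "\<forall>(V :: 'v set) N. scenario m B conv V N \<longrightarrow> alg_closed m cmp Pr' V N
              \<longrightarrow> alg_closed m cmp Pr V N"
  proof (intro allI impI)
    fix V :: "'v set" and N
    assume sc: "scenario m B conv V N" and ac: "alg_closed m cmp Pr' V N"
    show "alg_closed m cmp Pr V N"
      using sc ac p1 unfolding scenario_def alg_closed_def by blast
  qed
  ultimately show ?thesis by blast
qed

end
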